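(* Let $\Lambda$ be a finite non-empty set, let $(\xi_x)_{x\in\Lambda}$ be IID real random variables (law $\mathbb P$) with $\mathbb P(\xi_x\ge-1)=1$ and $\mathbb E[(\log(1+\xi_x))_+]<\infty$, and let $\mathbf P_\Lambda$ be an arbitrary (deterministic) probability distribution of a random vector $(\delta_x)_{x\in\Lambda}\in\{0,1\}^\Lambda$. Then $$\mathbb E\log\mathbf E_\Lambda\Big[\prod_{x\in\Lambda:\,\delta_x=1}(1+\xi_x)\Big]\le|\Lambda|\max_{p\in[0,1]}\mathbb E\big[\log(1+p\,\xi)\big],$$ where $\xi$ has the law of $\xi_x$ and an empty product equals $1$.
   Context: $\mathbb E$ denotes expectation with respect to the $\xi$'s, $\mathbf E_\Lambda$ expectation with respect to $\mathbf P_\Lambda$; $(a)_+=\max(a,0)$. The function $p\mapsto\mathbb E[\log(1+p\xi)]$ takes values in $\mathbb R\cup\{-\infty\}$. *)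

theory Defs
  imports "HOL-Probability.Probability"
begin

definition elog :: "real \<Rightarrow> ereal" where
  "elog t = (if 0 < t then ereal (ln t) else -\<infinity>)"

text \<open>Expectation of an extended-real valued function: integral of positive part
  minus integral of negative part (meaningful when the positive part is finite).\<close>
definition eexpect :: "'w measure \<Rightarrow> ('w \<Rightarrow> ereal) \<Rightarrow> ereal" where
  "eexpect M f = enn2ereal (\<integral>\<^sup>+ w. e2ennreal (f w) \<partial>M) - enn2ereal (\<integral>\<^sup>+ w. e2ennreal (- f w) \<partial>M)"

end

theory Submission
  imports Defs
begin

lemma pp_elog: "e2ennreal (elog z) = ennreal (ln (max 1 z))"
proof (cases "0 < z")
  case True
  then show ?thesis
    by (cases "z \<ge> 1") (auto simp: elog_def ennreal_neg max_def)
next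
  case False
  then show ?thesis by (simp add: elog_def e2ennreal_neg max_def)
qed

lemma nn_elog: "e2ennreal (- elog z) = (if 0 < z then ennreal (- ln (min 1 z)) else \<infinity>)"
proof (cases "0 < z")
  case True
  then show ?thesis
    by (cases "z \<ge> 1") (auto simp: elog_def ennreal_neg min_def)
next
  case False
  then show ?thesis by (simp add: elog_def)
qed

lemma elog_not_inf[simp]: "elog z \<noteq> \<infinity>"
  by (simp add: elog_def)

lemma measurable_elog[measurable]: "elog \<in> borel_measurable borel"
  unfolding elog_def[abs_def] by measurable

lemma eexpect_cong_AE:
  assumes "AE w in M. f w = g w"
  shows "eexpect M f = eexpect M g"
  unfolding eexpect_def
  using assms by (intro arg_cong2[where f="(-)"] arg_cong[where f=enn2ereal] nn_integral_cong_AE) auto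

lemma pp_add_real: "ennreal (r + s) \<le> ennreal r + ennreal s"
  by (cases "r \<ge> 0"; cases "s \<ge> 0"; cases "r + s \<ge> 0")
     (auto simp: ennreal_neg ennreal_plus[symmetric] ennreal_leI simp del: ennreal_plus)

lemma pn_real: "ennreal (r + s) + ennreal (- r) + ennreal (- s) = ennreal (- r - s) + ennreal r + ennreal (s::real)"
  by (cases "r \<ge> 0"; cases "s \<ge> 0"; cases "r + s \<ge> 0")
     (auto simp: ennreal_neg ennreal_plus[symmetric] simp del: ennreal_plus)

lemma pp_add_le: "(a::ereal) \<noteq> \<infinity> \<Longrightarrow> b \<noteq> \<infinity> \<Longrightarrow> e2ennreal (a + b) \<le> e2ennreal a + e2ennreal b"
  by (cases a; cases b) (auto simp: pp_add_real)

lemma pn_identity: "(a::ereal) \<noteq> \<infinity> \<Longrightarrow> b \<noteq> \<infinity> \<Longrightarrow>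
   e2ennreal (a + b) + e2ennreal (-a) + e2ennreal (-b) = e2ennreal (-(a+b)) + e2ennreal a + e2ennreal b"
  by (cases a; cases b) (auto simp: pn_real)

lemma fin_ennreal: "x < \<infinity> \<Longrightarrow> \<exists>r\<ge>0. x = ennreal r"
  by (cases x rule: ennreal_cases) auto

lemma ennreal_alg1:
  fixes a b c d e h :: ennreal
  assumes "a + b + c = d + e + h" "a < \<infinity>" "e < \<infinity>" "h < \<infinity>"
  shows "enn2ereal a - enn2ereal d \<le> (enn2ereal e - enn2ereal b) + (enn2ereal h - enn2ereal c)"
proof (cases "b = \<infinity> \<or> c = \<infinity>")
  case True
  then have "d = \<infinity>" using assms
    by (metis add.commute ennreal_add_eq_top infinity_ennreal_def less_irrefl)
  then show ?thesis using True assms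
    by (cases a rule: ennreal_cases; cases e rule: ennreal_cases; cases h rule: ennreal_cases; auto)
next
  case False
  have "d < \<infinity>"
  proof -
    have "d \<le> d + e + h" by (simp add: add.assoc)
    also have "\<dots> = a + b + c" using assms(1) by simp
    also have "\<dots> < \<infinity>" using False assms(2) by (simp add: less_top[symmetric])
    finally show ?thesis .
  qed
  have fa: "a < \<infinity>" "b < \<infinity>" "c < \<infinity>" "e < \<infinity>" "h < \<infinity>"
    using False assms by (auto simp: less_top)
  obtain a' where a': "a = ennreal a'" "0 \<le> a'" using fin_ennreal[OF fa(1)] by blast
  obtain b' where b': "b = ennreal b'" "0 \<le> b'" using fin_ennreal[OF fa(2)] by blast
  obtain c' where c': "c = ennreal c'" "0 \<le> c'" using fin_ennreal[OF fa(3)] by blast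
  obtain d' where d': "d = ennreal d'" "0 \<le> d'" using fin_ennreal[OF \<open>d < \<infinity>\<close>] by blast
  obtain e' where e': "e = ennreal e'" "0 \<le> e'" using fin_ennreal[OF fa(4)] by blast
  obtain h' where h': "h = ennreal h'" "0 \<le> h'" using fin_ennreal[OF fa(5)] by blast
  have "ennreal (a' + b' + c') = ennreal (d' + e' + h')"
    using assms(1) a' b' c' d' e' h' by (simp add: ennreal_plus[symmetric] del: ennreal_plus)
  then have "a' + b' + c' = d' + e' + h'"
    using a' b' c' d' e' h' by (subst (asm) ennreal_inj) auto
  then show ?thesis using a' b' c' d' e' h' by simp
qed

lemma ennreal_alg2:
  fixes a b :: ennreal
  assumes "a \<le> b + ennreal c" "a < \<infinity>" "0 \<le> c"
  shows "enn2ereal a - enn2ereal b \<le> ereal c"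
  using assms
  by (cases a rule: ennreal_cases; cases b rule: ennreal_cases)
     (auto simp: ennreal_plus[symmetric] simp del: ennreal_plus)

lemma ennreal_alg3:
  fixes a b :: ennreal
  assumes "enn2ereal a - enn2ereal b \<le> ereal c" "a < \<infinity>" "0 \<le> c"
  shows "a \<le> b + ennreal c"
  using assms
  by (cases a rule: ennreal_cases; cases b rule: ennreal_cases)
     (auto simp: ennreal_plus[symmetric] simp del: ennreal_plus)

lemma eexpect_add_le:
  assumes f[measurable]: "f \<in> borel_measurable M" and g[measurable]: "g \<in> borel_measurable M"
  and fi: "\<And>w. f w \<noteq> \<infinity>" and gi: "\<And>w. g w \<noteq> \<infinity>"
  and ff: "(\<integral>\<^sup>+w. e2ennreal (f w) \<partial>M) < \<infinity>" and gf: "(\<integral>\<^sup>+w. e2ennreal (g w) \<partial>M) < \<infinity>"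
  shows "eexpect M (\<lambda>w. f w + g w) \<le> eexpect M f + eexpect M g"
proof -
  have a: "(\<integral>\<^sup>+w. e2ennreal (f w + g w) \<partial>M) \<le> (\<integral>\<^sup>+w. e2ennreal (f w) \<partial>M) + (\<integral>\<^sup>+w. e2ennreal (g w) \<partial>M)"
    by (subst nn_integral_add[symmetric]) (auto intro!: nn_integral_mono pp_add_le fi gi)
  have "(\<integral>\<^sup>+w. e2ennreal (f w + g w) \<partial>M) + (\<integral>\<^sup>+w. e2ennreal (- f w) \<partial>M) + (\<integral>\<^sup>+w. e2ennreal (- g w) \<partial>M)
     = (\<integral>\<^sup>+w. e2ennreal (f w + g w) + e2ennreal (- f w) + e2ennreal (- g w) \<partial>M)"
    by (simp add: nn_integral_add)
  also have "\<dots> = (\<integral>\<^sup>+w. e2ennreal (- (f w + g w)) + e2ennreal (f w) + e2ennreal (g w) \<partial>M)"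
    by (intro nn_integral_cong pn_identity fi gi)
  also have "\<dots> = (\<integral>\<^sup>+w. e2ennreal (- (f w + g w)) \<partial>M) + (\<integral>\<^sup>+w. e2ennreal (f w) \<partial>M) + (\<integral>\<^sup>+w. e2ennreal (g w) \<partial>M)"
    by (simp add: nn_integral_add)
  finally have eq: "(\<integral>\<^sup>+w. e2ennreal (f w + g w) \<partial>M) + (\<integral>\<^sup>+w. e2ennreal (- f w) \<partial>M) + (\<integral>\<^sup>+w. e2ennreal (- g w) \<partial>M)
     = (\<integral>\<^sup>+w. e2ennreal (- (f w + g w)) \<partial>M) + (\<integral>\<^sup>+w. e2ennreal (f w) \<partial>M) + (\<integral>\<^sup>+w. e2ennreal (g w) \<partial>M)" .
  have "(\<integral>\<^sup>+w. e2ennreal (f w + g w) \<partial>M) < \<infinity>"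
    by (rule le_less_trans[OF a]) (use ff gf in \<open>simp add: infinity_ennreal_def\<close>)
  from ennreal_alg1[OF eq this ff gf] show ?thesis
    unfolding eexpect_def by simp
qed

definition ZZ :: "'a set \<Rightarrow> ('a set \<Rightarrow> real) \<Rightarrow> ('a \<Rightarrow> real) \<Rightarrow> real" where
  "ZZ K q \<omega> = (\<Sum>S\<in>Pow K. q S * (\<Prod>x\<in>S. 1 + \<omega> x))"

lemma comp_meas: "x \<in> I \<Longrightarrow> sets L = sets borel \<Longrightarrow> (\<lambda>\<omega>. \<omega> x) \<in> borel_measurable (PiM I (\<lambda>_. L))"
  using measurable_component_singleton[of x I "\<lambda>_. L"] measurable_cong_sets[of "PiM I (\<lambda>_. L)" "PiM I (\<lambda>_. L)" L borel]
  by simp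

lemma L_meas: "sets L = sets borel \<Longrightarrow> f \<in> borel_measurable borel \<Longrightarrow> f \<in> borel_measurable L"
  using measurable_cong_sets[of L borel borel borel] by simp

lemma ZZ_meas: "K \<subseteq> I \<Longrightarrow> finite K \<Longrightarrow> sets L = sets borel \<Longrightarrow> ZZ K q \<in> borel_measurable (PiM I (\<lambda>_. L))"
  unfolding ZZ_def[abs_def]
  by (intro borel_measurable_sum borel_measurable_times borel_measurable_const borel_measurable_prod
        borel_measurable_add comp_meas) auto

lemma ZZ_upd: "x0 \<notin> K \<Longrightarrow> ZZ K q (fun_upd \<omega> x0 y) = ZZ K q \<omega>"
  unfolding ZZ_def by (intro sum.cong refl arg_cong2[where f="(*)"] prod.cong) auto

lemma Pow_insert_sum:
  assumes "finite K" "x0 \<notin> K"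
  shows "(\<Sum>S\<in>Pow (insert x0 K). f S) = (\<Sum>T\<in>Pow K. f T) + (\<Sum>T\<in>Pow K. f (insert x0 T))"
proof -
  have inj: "inj_on (insert x0) (Pow K)"
    using assms(2) by (auto simp: inj_on_def)
  have "(\<Sum>S\<in>Pow (insert x0 K). f S) = (\<Sum>T\<in>Pow K. f T) + (\<Sum>S\<in>insert x0 ` Pow K. f S)"
    unfolding Pow_insert using assms by (intro sum.union_disjoint) auto
  also have "(\<Sum>S\<in>insert x0 ` Pow K. f S) = (\<Sum>T\<in>Pow K. f (insert x0 T))"
    by (rule sum.reindex[OF inj, unfolded comp_def])
  finally show ?thesis .
qed

lemma ZZ_split:
  assumes "finite K" "x0 \<notin> K"
  shows "ZZ (insert x0 K) q \<omega> = ZZ K (\<lambda>T. q T + q (insert x0 T)) \<omega> + ZZ K (\<lambda>T. q (insert x0 T)) \<omega> * \<omega> x0"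
proof -
  have "ZZ (insert x0 K) q \<omega> = (\<Sum>T\<in>Pow K. q T * (\<Prod>x\<in>T. 1 + \<omega> x)) +
      (\<Sum>T\<in>Pow K. q (insert x0 T) * (\<Prod>x\<in>insert x0 T. 1 + \<omega> x))"
    unfolding ZZ_def by (rule Pow_insert_sum[OF assms])
  also have "(\<Sum>T\<in>Pow K. q (insert x0 T) * (\<Prod>x\<in>insert x0 T. 1 + \<omega> x))
     = (\<Sum>T\<in>Pow K. q (insert x0 T) * (\<Prod>x\<in>T. 1 + \<omega> x) + q (insert x0 T) * (\<Prod>x\<in>T. 1 + \<omega> x) * \<omega> x0)"
  proof (rule sum.cong[OF refl])
    fix T assume "T \<in> Pow K"
    then have "finite T" "x0 \<notin> T" using assms finite_subset by auto
    then show "q (insert x0 T) * (\<Prod>x\<in>insert x0 T. 1 + \<omega> x) = q (insert x0 T) * (\<Prod>x\<in>T. 1 + \<omega> x) + q (insert x0 T) * (\<Prod>x\<in>T. 1 + \<omega> x) * \<omega> x0"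
      by (simp add: algebra_simps)
  qed
  finally show ?thesis
    unfolding ZZ_def by (simp add: sum.distrib sum_distrib_right sum_distrib_left algebra_simps)
qed

lemma ZZ_BA:
  assumes "\<forall>x\<in>K. -1 \<le> \<omega> x" "\<forall>S. 0 \<le> q S"
  shows "0 \<le> ZZ K (\<lambda>T. q (insert x0 T)) \<omega> \<and> ZZ K (\<lambda>T. q (insert x0 T)) \<omega> \<le> ZZ K (\<lambda>T. q T + q (insert x0 T)) \<omega>"
proof -
  have P: "T \<in> Pow K \<Longrightarrow> 0 \<le> (\<Prod>x\<in>T. 1 + \<omega> x)" for T
    using assms(1) by (intro prod_nonneg) (auto simp: add.commute[of 1] dest!: bspec)
  show ?thesis unfolding ZZ_def using assms(2) P
    by (auto intro!: sum_nonneg sum_mono mult_right_mono simp: distrib_right)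
qed

lemma elog_split:
  assumes "0 \<le> B" "B \<le> A"
  shows "elog (A + B * y) = elog A + elog (1 + (B / A) * y)"
proof (cases "A = 0")
  case True
  then have "B = 0" using assms by auto
  then show ?thesis using True by (simp add: elog_def)
next
  case False
  then have A: "0 < A" using assms by auto
  have eq: "A + B * y = A * (1 + (B / A) * y)" using A by (simp add: field_simps)
  show ?thesis
  proof (cases "0 < 1 + (B / A) * y")
    case True
    then show ?thesis unfolding eq using A by (simp add: elog_def ln_mult)
  next
    case False
    then have "\<not> 0 < A * (1 + (B / A) * y)" using A by (simp add: zero_less_mult_iff)
    then show ?thesis unfolding eq using A False by (simp add: elog_def)
  qed
qed

lemma pp_mono_r:
  assumes "0 \<le> r" "r \<le> 1"
  shows "e2ennreal (elog (1 + r * y)) \<le> e2ennreal (elog (1 + y))"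
proof -
  have "r * y \<le> max 0 y"
    using assms by (cases "y \<ge> 0") (auto simp: mult_left_le_one_le mult_nonneg_nonpos max_def)
  then have "max 1 (1 + r * y) \<le> max 1 (1 + y)" by auto
  then have "ln (max 1 (1 + r * y)) \<le> ln (max 1 (1 + y))" by simp
  then show ?thesis unfolding pp_elog by (rule ennreal_leI)
qed

lemma core:
  fixes L :: "real measure" and \<Phi> :: real and K :: "'a set"
  assumes PL: "prob_space L" and SL: "sets L = sets borel"
    and AEL: "AE t in L. -1 \<le> t"
    and CL: "(\<integral>\<^sup>+ t. e2ennreal (elog (1 + t)) \<partial>L) < \<infinity>"
    and PHI: "\<forall>p\<in>{0..1}. eexpect L (\<lambda>t. elog (1 + p * t)) \<le> ereal \<Phi>"
    and K: "finite K"
  shows "\<forall>q. (\<forall>S. 0 \<le> q S) \<longrightarrow> (\<Sum>S\<in>Pow K. q S) = 1 \<longrightarrow>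
     (\<integral>\<^sup>+\<omega>. e2ennreal (elog (ZZ K q \<omega>)) \<partial>PiM K (\<lambda>_. L)) < \<infinity> \<and>
     eexpect (PiM K (\<lambda>_. L)) (\<lambda>\<omega>. elog (ZZ K q \<omega>)) \<le> ereal (real (card K) * \<Phi>)"
  using K
proof (induction K)
  case empty
  show ?case
  proof (intro allI impI)
    fix q :: "'a set \<Rightarrow> real" assume "\<forall>S. 0 \<le> q S" "(\<Sum>S\<in>Pow {}. q S) = 1"
    then have "ZZ {} q \<omega> = 1" for \<omega> by (simp add: ZZ_def)
    then show "(\<integral>\<^sup>+\<omega>. e2ennreal (elog (ZZ {} q \<omega>)) \<partial>PiM {} (\<lambda>_. L)) < \<infinity> \<and>
     eexpect (PiM {} (\<lambda>_. L)) (\<lambda>\<omega>. elog (ZZ {} q \<omega>)) \<le> ereal (real (card {}) * \<Phi>)"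
      by (simp add: eexpect_def elog_def)
  qed
next
  case (insert x0 K)
  note fK = \<open>finite K\<close> and x0K = \<open>x0 \<notin> K\<close>
  interpret PS: product_sigma_finite "\<lambda>_. L"
    by (rule product_sigma_finite.intro) (simp add: PL prob_space_imp_sigma_finite)
  interpret PK: prob_space "PiM K (\<lambda>_. L)"
    by (rule prob_space_PiM) (simp add: PL)
  interpret PL: prob_space L by (rule PL)
  have Phi0: "0 \<le> \<Phi>"
    using PHI[rule_format, of 0] by (simp add: eexpect_def elog_def)
  let ?K' = "insert x0 K"
  let ?M' = "PiM ?K' (\<lambda>_. L)"
  let ?M = "PiM K (\<lambda>_. L)"
  show ?case
  proof (intro allI impI)
    fix q :: "'a set \<Rightarrow> real" assume q0: "\<forall>S. 0 \<le> q S" and qs: "(\<Sum>S\<in>Pow ?K'. q S) = 1"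
    define q' where "q' T = q T + q (insert x0 T)" for T
    define qb where "qb T = q (insert x0 T)" for T
    define A where "A = ZZ K q'"
    define B where "B = ZZ K qb"
    define r where "r \<omega> = B \<omega> / A \<omega>" for \<omega>
    define w where "w \<omega> = elog (1 + r \<omega> * \<omega> x0)" for \<omega>
    have q'0: "\<forall>S. 0 \<le> q' S" using q0 by (simp add: q'_def)
    have q's: "(\<Sum>S\<in>Pow K. q' S) = 1"
      using qs Pow_insert_sum[OF fK x0K, of q] by (simp add: q'_def sum.distrib)
    have IHq: "(\<integral>\<^sup>+\<omega>. e2ennreal (elog (ZZ K q' \<omega>)) \<partial>?M) < \<infinity> \<and>
       eexpect ?M (\<lambda>\<omega>. elog (ZZ K q' \<omega>)) \<le> ereal (real (card K) * \<Phi>)"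
      using insert.IH q'0 q's by blast
    then have finA: "(\<integral>\<^sup>+\<omega>. e2ennreal (elog (A \<omega>)) \<partial>?M) < \<infinity>"
      and EA: "eexpect ?M (\<lambda>\<omega>. elog (A \<omega>)) \<le> ereal (real (card K) * \<Phi>)"
      by (simp_all add: A_def)
    have split: "ZZ ?K' q \<omega> = A \<omega> + B \<omega> * \<omega> x0" for \<omega>
      unfolding A_def B_def q'_def qb_def by (rule ZZ_split[OF fK x0K])
    have upd: "A (fun_upd \<omega> x0 y) = A \<omega>" "B (fun_upd \<omega> x0 y) = B \<omega>" "r (fun_upd \<omega> x0 y) = r \<omega>" for \<omega> y
      unfolding r_def A_def B_def using ZZ_upd[OF x0K] by simp_all
    have BA: "\<forall>x\<in>K. -1 \<le> \<omega> x \<Longrightarrow> 0 \<le> B \<omega> \<and> B \<omega> \<le> A \<omega>" for \<omega>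
      unfolding A_def B_def q'_def qb_def using ZZ_BA[OF _ q0] by blast
    have rr: "\<forall>x\<in>K. -1 \<le> \<omega> x \<Longrightarrow> 0 \<le> r \<omega> \<and> r \<omega> \<le> 1" for \<omega>
      using BA[of \<omega>] unfolding r_def by (auto simp: divide_le_eq_1)
    have AE': "AE \<omega> in ?M'. \<forall>x\<in>?K'. -1 \<le> \<omega> x"
      by (intro AE_finite_allI) (auto intro!: AE_PiM_component[where P="\<lambda>t. -1 \<le> t"] AEL PL fK)
    have AEK: "AE \<omega> in ?M. \<forall>x\<in>K. -1 \<le> \<omega> x"
      by (intro AE_finite_allI) (auto intro!: AE_PiM_component[where P="\<lambda>t. -1 \<le> t"] AEL PL fK)
    have mA': "A \<in> borel_measurable ?M'" "B \<in> borel_measurable ?M'"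
      unfolding A_def B_def by (auto intro!: ZZ_meas SL fK)
    have mA: "A \<in> borel_measurable ?M"
      unfolding A_def by (auto intro!: ZZ_meas SL fK)
    have mx0: "(\<lambda>\<omega>. \<omega> x0) \<in> borel_measurable ?M'"
      by (rule comp_meas[OF _ SL]) simp
    have mr: "r \<in> borel_measurable ?M'"
      unfolding r_def[abs_def] using mA' by measurable
    have mw: "w \<in> borel_measurable ?M'"
      unfolding w_def[abs_def] using mr mx0 by measurable
    have meA': "(\<lambda>\<omega>. elog (A \<omega>)) \<in> borel_measurable ?M'"
      using mA' by measurable
    have meA: "(\<lambda>\<omega>. elog (A \<omega>)) \<in> borel_measurable ?M"
      using mA by measurable
    have mpp: "(\<lambda>\<omega>. e2ennreal (f \<omega>)) \<in> borel_measurable N" if "f \<in> borel_measurable N" for f :: "_ \<Rightarrow> ereal" and N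
      using that by measurable
    have dec: "AE \<omega> in ?M'. elog (ZZ ?K' q \<omega>) = elog (A \<omega>) + w \<omega>"
      using AE'
    proof eventually_elim
      case (elim \<omega>)
      then have "\<forall>x\<in>K. -1 \<le> \<omega> x" by auto
      from BA[OF this] show ?case
        unfolding split w_def r_def using elog_split by blast
    qed
    interpret PK': prob_space ?M'
      by (rule prob_space_PiM) (simp add: PL)
    have FA: "(\<integral>\<^sup>+\<omega>. h (A \<omega>) \<partial>?M') = (\<integral>\<^sup>+\<omega>. h (A \<omega>) \<partial>?M)"
      if hm: "h \<in> borel_measurable borel" for h :: "real \<Rightarrow> ennreal"
      by (subst PS.product_nn_integral_insert[OF fK x0K])
         (auto intro!: nn_integral_cong simp: upd PL.emeasure_space_1 measurable_compose[OF mA'(1) hm])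
    have EAeq: "eexpect ?M' (\<lambda>\<omega>. elog (A \<omega>)) = eexpect ?M (\<lambda>\<omega>. elog (A \<omega>))"
      unfolding eexpect_def
      using FA[of "\<lambda>z. e2ennreal (elog z)"] FA[of "\<lambda>z. e2ennreal (- elog z)"] by simp
    have finA': "(\<integral>\<^sup>+\<omega>. e2ennreal (elog (A \<omega>)) \<partial>?M') < \<infinity>"
      using FA[of "\<lambda>z. e2ennreal (elog z)"] finA by simp
    define C where "C = (\<integral>\<^sup>+ t. e2ennreal (elog (1 + t)) \<partial>L)"
    have Cx0: "(\<integral>\<^sup>+\<omega>. e2ennreal (elog (1 + \<omega> x0)) \<partial>?M') = C"
      using mx0 by (subst PS.product_nn_integral_insert[OF fK x0K]) (simp_all add: C_def PK.emeasure_space_1)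
    have finw: "(\<integral>\<^sup>+\<omega>. e2ennreal (w \<omega>) \<partial>?M') < \<infinity>"
    proof -
      have "(\<integral>\<^sup>+\<omega>. e2ennreal (w \<omega>) \<partial>?M') \<le> (\<integral>\<^sup>+\<omega>. e2ennreal (elog (1 + \<omega> x0)) \<partial>?M')"
        using AE' by (intro nn_integral_mono_AE) (auto simp: w_def intro!: pp_mono_r dest!: rr)
      also have "\<dots> < \<infinity>" using Cx0 CL by (simp add: C_def)
      finally show ?thesis .
    qed
    have Gb: "(\<integral>\<^sup>+y. e2ennreal (elog (1 + p * y)) \<partial>L) \<le> (\<integral>\<^sup>+y. e2ennreal (- elog (1 + p * y)) \<partial>L) + ennreal \<Phi>"
      if p: "0 \<le> p" "p \<le> 1" for p
    proof (rule ennreal_alg3[OF _ _ Phi0])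
      show "enn2ereal (\<integral>\<^sup>+y. e2ennreal (elog (1 + p * y)) \<partial>L) - enn2ereal (\<integral>\<^sup>+y. e2ennreal (- elog (1 + p * y)) \<partial>L) \<le> ereal \<Phi>"
        using PHI p by (auto simp: eexpect_def)
      have "(\<integral>\<^sup>+y. e2ennreal (elog (1 + p * y)) \<partial>L) \<le> C"
        unfolding C_def by (intro nn_integral_mono pp_mono_r p)
      then show "(\<integral>\<^sup>+y. e2ennreal (elog (1 + p * y)) \<partial>L) < \<infinity>"
        using CL C_def by (simp add: le_less_trans)
    qed
    have mLn: "(\<lambda>y. e2ennreal (- elog (1 + c * y))) \<in> borel_measurable L" for c
      by (rule L_meas[OF SL]) measurable
    have mnw: "(\<lambda>\<omega>. e2ennreal (- w \<omega>)) \<in> borel_measurable ?M'"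
      using mw by measurable
    have wbound: "(\<integral>\<^sup>+\<omega>. e2ennreal (w \<omega>) \<partial>?M') \<le> (\<integral>\<^sup>+\<omega>. e2ennreal (- w \<omega>) \<partial>?M') + ennreal \<Phi>"
    proof -
      have "(\<integral>\<^sup>+\<omega>. e2ennreal (w \<omega>) \<partial>?M') = (\<integral>\<^sup>+\<omega>. (\<integral>\<^sup>+y. e2ennreal (elog (1 + r \<omega> * y)) \<partial>L) \<partial>?M)"
        using mpp[OF mw] unfolding w_def by (subst PS.product_nn_integral_insert[OF fK x0K]) (auto simp: upd)
      also have "\<dots> \<le> (\<integral>\<^sup>+\<omega>. ((\<integral>\<^sup>+y. e2ennreal (- elog (1 + r \<omega> * y)) \<partial>L) + ennreal \<Phi>) \<partial>?M)"
        using AEK by (intro nn_integral_mono_AE) (auto intro!: Gb dest!: rr)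
      also have "\<dots> = (\<integral>\<^sup>+\<omega>. (\<integral>\<^sup>+y. e2ennreal (- elog (1 + r \<omega> * y)) + ennreal \<Phi> \<partial>L) \<partial>?M)"
        by (intro nn_integral_cong) (simp add: nn_integral_add mLn PL.emeasure_space_1)
      also have "\<dots> = (\<integral>\<^sup>+\<omega>. e2ennreal (- w \<omega>) + ennreal \<Phi> \<partial>?M')"
        using mnw by (subst PS.product_nn_integral_insert[OF fK x0K]) (auto simp: w_def upd)
      also have "\<dots> = (\<integral>\<^sup>+\<omega>. e2ennreal (- w \<omega>) \<partial>?M') + ennreal \<Phi>"
        using mnw by (simp add: nn_integral_add PK'.emeasure_space_1)
      finally show ?thesis .
    qed
    have Ew: "eexpect ?M' w \<le> ereal \<Phi>"
      using ennreal_alg2[OF wbound finw Phi0] unfolding eexpect_def .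
    have "eexpect ?M' (\<lambda>\<omega>. elog (ZZ ?K' q \<omega>)) = eexpect ?M' (\<lambda>\<omega>. elog (A \<omega>) + w \<omega>)"
      by (rule eexpect_cong_AE[OF dec])
    also have "\<dots> \<le> eexpect ?M' (\<lambda>\<omega>. elog (A \<omega>)) + eexpect ?M' w"
      using finA' finw by (intro eexpect_add_le[OF meA' mw]) (simp_all add: w_def infinity_ennreal_def)
    also have "\<dots> \<le> ereal (real (card K) * \<Phi>) + ereal \<Phi>"
      unfolding EAeq by (rule add_mono[OF EA Ew])
    also have "\<dots> = ereal (real (card ?K') * \<Phi>)"
      using fK x0K by (simp add: algebra_simps)
    finally have E: "eexpect ?M' (\<lambda>\<omega>. elog (ZZ ?K' q \<omega>)) \<le> ereal (real (card ?K') * \<Phi>)" .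
    have "(\<integral>\<^sup>+\<omega>. e2ennreal (elog (ZZ ?K' q \<omega>)) \<partial>?M') = (\<integral>\<^sup>+\<omega>. e2ennreal (elog (A \<omega>) + w \<omega>) \<partial>?M')"
      using dec by (intro nn_integral_cong_AE) auto
    also have "\<dots> \<le> (\<integral>\<^sup>+\<omega>. e2ennreal (elog (A \<omega>)) + e2ennreal (w \<omega>) \<partial>?M')"
      by (intro nn_integral_mono pp_add_le) (simp_all add: w_def)
    also have "\<dots> = (\<integral>\<^sup>+\<omega>. e2ennreal (elog (A \<omega>)) \<partial>?M') + (\<integral>\<^sup>+\<omega>. e2ennreal (w \<omega>) \<partial>?M')"
      using mpp[OF meA'] mpp[OF mw] by (intro nn_integral_add) auto
    also have "\<dots> < \<infinity>" using finA' finw by (simp add: infinity_ennreal_def)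
    finally have Fin: "(\<integral>\<^sup>+\<omega>. e2ennreal (elog (ZZ ?K' q \<omega>)) \<partial>?M') < \<infinity>" .
    show "(\<integral>\<^sup>+\<omega>. e2ennreal (elog (ZZ ?K' q \<omega>)) \<partial>?M') < \<infinity> \<and> eexpect ?M' (\<lambda>\<omega>. elog (ZZ ?K' q \<omega>)) \<le> ereal (real (card ?K') * \<Phi>)"
      using Fin E by blast
  qed
qed

lemma elog_tendsto:
  fixes z :: "nat \<Rightarrow> real"
  assumes nn: "\<And>n. 0 \<le> z n" and lim: "z \<longlonglongrightarrow> z0"
  shows "(\<lambda>n. elog (z n)) \<longlonglongrightarrow> elog z0"
proof -
  have z0: "0 \<le> z0" using lim nn by (intro LIMSEQ_le_const) auto
  show ?thesis
  proof (cases "z0 = 0")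
    case True
    have e0: "elog z0 = -\<infinity>" using True by (simp add: elog_def)
    show ?thesis unfolding e0 tendsto_MInfty
    proof
      fix r
      have "eventually (\<lambda>n. z n < exp r) sequentially" using lim True by (intro order_tendstoD(2)) auto
      then show "eventually (\<lambda>n. elog (z n) < ereal r) sequentially"
      proof eventually_elim
        case (elim n)
        show ?case
        proof (cases "0 < z n")
          case True
          then have "ln (z n) < ln (exp r)" using elim by (subst ln_less_cancel_iff) auto
          then show ?thesis using True by (simp add: elog_def)
        qed (simp add: elog_def)
      qed
    qed
  next
    case False
    then have zp: "0 < z0" using z0 by simp
    then have ev: "eventually (\<lambda>n. 0 < z n) sequentially" using lim by (intro order_tendstoD(1))
    have l: "(\<lambda>n. ereal (ln (z n))) \<longlonglongrightarrow> ereal (ln z0)" using lim zp by (intro tendsto_ereal tendsto_ln) auto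
    have ev': "eventually (\<lambda>n. ereal (ln (z n)) = elog (z n)) sequentially"
      using ev by eventually_elim (simp add: elog_def)
    have "(\<lambda>n. elog (z n)) \<longlonglongrightarrow> ereal (ln z0)" using tendsto_cong[OF ev'] l by simp
    then show ?thesis using zp by (simp add: elog_def)
  qed
qed

lemma pt_conv:
  assumes "\<forall>n. pn n \<in> {0..1::real}" "pn \<longlonglongrightarrow> p" "-1 \<le> t"
  shows "(\<lambda>n. elog (1 + pn n * t)) \<longlonglongrightarrow> elog (1 + p * t)"
proof (rule elog_tendsto)
  fix n
  have "0 \<le> pn n" "pn n \<le> 1" using assms(1) by auto
  show "0 \<le> 1 + pn n * t"
  proof (cases "0 \<le> t")
    case False
    have "1 * t \<le> pn n * t"
      using mult_right_mono_neg[of "pn n" 1 t] \<open>pn n \<le> 1\<close> False by simp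
    then show ?thesis using assms(3) by simp
  qed (use \<open>0 \<le> pn n\<close> in simp)
next
  show "(\<lambda>n. 1 + pn n * t) \<longlonglongrightarrow> 1 + p * t" using assms(2) by (intro tendsto_intros)
qed

lemma alg4:
  fixes G H :: ennreal
  assumes "G \<le> ennreal x" "0 \<le> x" "b < 0 \<or> ennreal b \<le> H"
  shows "enn2ereal G - enn2ereal H \<le> ereal (x - b)"
  using assms
  by (cases G rule: ennreal_cases; cases H rule: ennreal_cases)
     (auto simp: ennreal_le_iff2 top_unique)

lemma max_exists:
  fixes L :: "real measure"
  assumes PL: "prob_space L" and SL: "sets L = sets borel"
    and AEL: "AE t in L. -1 \<le> t"
    and CL: "(\<integral>\<^sup>+ t. e2ennreal (elog (1 + t)) \<partial>L) < \<infinity>"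
  shows "\<exists>p\<in>{0..1::real}. \<forall>q\<in>{0..1::real}. eexpect L (\<lambda>t. elog (1 + q * t)) \<le> eexpect L (\<lambda>t. elog (1 + p * t))"
proof -
  interpret PL: prob_space L by (rule PL)
  define \<phi> where "\<phi> p = eexpect L (\<lambda>t. elog (1 + p * t))" for p
  define G where "G p = (\<integral>\<^sup>+ t. e2ennreal (elog (1 + p * t)) \<partial>L)" for p
  define H where "H p = (\<integral>\<^sup>+ t. e2ennreal (- elog (1 + p * t)) \<partial>L)" for p
  define C where "C = (\<integral>\<^sup>+ t. e2ennreal (elog (1 + t)) \<partial>L)"
  have \<phi>GH: "\<phi> p = enn2ereal (G p) - enn2ereal (H p)" for p
    by (simp add: \<phi>_def G_def H_def eexpect_def)
  have GC: "G p \<le> C" if "p \<in> {0..1}" for p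
    unfolding G_def C_def using that by (intro nn_integral_mono pp_mono_r) auto
  have Cfin: "C < \<infinity>" using CL by (simp add: C_def)
  have \<phi>0: "\<phi> 0 = 0" by (simp add: \<phi>_def eexpect_def elog_def)
  have \<phi>C: "\<phi> p \<le> enn2ereal C" if "p \<in> {0..1}" for p
  proof -
    have "\<phi> p \<le> enn2ereal (G p)" unfolding \<phi>GH by (simp add: ereal_diff_le_self)
    also have "\<dots> \<le> enn2ereal C" using GC[OF that] by (simp add: less_eq_ennreal.rep_eq)
    finally show ?thesis .
  qed
  define s where "s = (SUP p\<in>{0..1::real}. \<phi> p)"
  have s0: "0 \<le> s" unfolding s_def using \<phi>0 by (metis SUP_upper atLeastAtMost_iff order_refl zero_le_one)
  have sC: "s \<le> enn2ereal C" unfolding s_def by (rule SUP_least) (rule \<phi>C)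
  have "enn2ereal C \<noteq> \<infinity>" using Cfin by simp
  then obtain s' where s': "s = ereal s'" using s0 sC by (cases s) auto
  have "\<forall>n. \<exists>p\<in>{0..1::real}. ereal (s' - 1 / Suc n) < \<phi> p"
  proof
    fix n :: nat
    have "ereal (s' - 1 / Suc n) < s" using s' by simp
    then show "\<exists>p\<in>{0..1::real}. ereal (s' - 1 / Suc n) < \<phi> p" unfolding s_def by (simp add: less_SUP_iff)
  qed
  then obtain pn where pn: "\<forall>n. pn n \<in> {0..1::real} \<and> ereal (s' - 1 / Suc n) < \<phi> (pn n)" by metis
  obtain p r where p: "p \<in> {0..1::real}" and r: "strict_mono r" and lim0: "(pn \<circ> r) \<longlonglongrightarrow> p"
    using seq_compactE[OF compact_imp_seq_compact[OF compact_Icc], of pn 0 1] pn by blast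
  define qn where "qn = pn \<circ> r"
  have qn01: "\<forall>n. qn n \<in> {0..1}" using pn by (simp add: qn_def)
  have qnlim: "qn \<longlonglongrightarrow> p" using lim0 by (simp add: qn_def)
  have qnlow: "ereal (s' - 1 / Suc n) < \<phi> (qn n)" for n
  proof -
    have "n \<le> r n" using r by (rule seq_suble)
    then have "1 / real (Suc (r n)) \<le> 1 / real (Suc n)" by (intro divide_left_mono) auto
    then have "ereal (s' - 1 / Suc n) \<le> ereal (s' - 1 / Suc (r n))" by simp
    also have "\<dots> < \<phi> (qn n)" using pn by (simp add: qn_def)
    finally show ?thesis .
  qed
  have mpp: "(\<lambda>t. e2ennreal (elog (1 + c * t))) \<in> borel_measurable L" for c
    by (rule L_meas[OF SL]) measurable
  have mnn: "(\<lambda>t. e2ennreal (- elog (1 + c * t))) \<in> borel_measurable L" for c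
    by (rule L_meas[OF SL]) measurable
  have mC: "(\<lambda>t. e2ennreal (elog (1 + t))) \<in> borel_measurable L"
    by (rule L_meas[OF SL]) measurable
  have Glim: "(\<lambda>n. G (qn n)) \<longlonglongrightarrow> G p"
    unfolding G_def
  proof (rule nn_integral_dominated_convergence[OF mpp mpp mC])
    show "AE t in L. e2ennreal (elog (1 + qn j * t)) \<le> e2ennreal (elog (1 + t))" for j
      using qn01 by (intro AE_I2 pp_mono_r) auto
    show "(\<integral>\<^sup>+ t. e2ennreal (elog (1 + t)) \<partial>L) < \<infinity>" by (rule CL)
    show "AE t in L. (\<lambda>n. e2ennreal (elog (1 + qn n * t))) \<longlonglongrightarrow> e2ennreal (elog (1 + p * t))"
      using AEL by eventually_elim (intro tendsto_e2ennrealI pt_conv qn01 qnlim)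
  qed
  have Hliminf: "H p \<le> liminf (\<lambda>n. H (qn n))"
  proof -
    have "H p = (\<integral>\<^sup>+ t. liminf (\<lambda>n. e2ennreal (- elog (1 + qn n * t))) \<partial>L)"
      unfolding H_def
    proof (rule nn_integral_cong_AE)
      show "AE t in L. e2ennreal (- elog (1 + p * t)) = liminf (\<lambda>n. e2ennreal (- elog (1 + qn n * t)))"
        using AEL
      proof eventually_elim
        case (elim t)
        have "(\<lambda>n. e2ennreal (- elog (1 + qn n * t))) \<longlonglongrightarrow> e2ennreal (- elog (1 + p * t))"
          by (intro tendsto_e2ennrealI tendsto_uminus_ereal pt_conv qn01 qnlim elim)
        then show ?case by (simp add: lim_imp_Liminf)
      qed
    qed
    also have "\<dots> \<le> liminf (\<lambda>n. H (qn n))"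
      unfolding H_def by (rule nn_integral_liminf[OF mnn])
    finally show ?thesis .
  qed
  have "s \<le> \<phi> p"
  proof (rule ccontr)
    assume "\<not> s \<le> \<phi> p"
    then have lt: "\<phi> p < ereal s'" using s' by simp
    have "G p < \<infinity>" using GC[OF p] Cfin by (simp add: le_less_trans)
    then obtain g where g: "G p = ennreal g" "0 \<le> g" using fin_ennreal by blast
    obtain \<epsilon> b where eps: "0 < \<epsilon>" and bH: "b < 0 \<or> ennreal b < H p" and gb: "g + \<epsilon> - b \<le> s' - \<epsilon>"
    proof (cases "H p = \<infinity>")
      case True
      show ?thesis by (rule that[of 1 "g + 2 - s'"]) (auto simp: True)
    next
      case False
      then obtain h where h: "H p = ennreal h" "0 \<le> h" using fin_ennreal by (auto simp: less_top)
      have "ereal (g - h) < ereal s'" using lt g h by (simp add: \<phi>GH)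
      then have d: "0 < s' - g + h" by simp
      show ?thesis
      proof (rule that[of "(s' - g + h) / 4" "h - (s' - g + h) / 4"])
        show "h - (s' - g + h) / 4 < 0 \<or> ennreal (h - (s' - g + h) / 4) < H p"
        proof (cases "h - (s' - g + h) / 4 < 0")
          case False
          moreover have "0 < (s' - g + h) / 4" using d by simp
          ultimately have "0 < h" by linarith
          then show ?thesis using d h by (auto intro!: ennreal_lessI)
        qed simp
      qed (use d in \<open>simp_all add: field_simps\<close>)
    qed
    have ev1: "eventually (\<lambda>n. G (qn n) < ennreal (g + \<epsilon>)) sequentially"
      using Glim g eps by (intro order_tendstoD(2)) (auto simp: ennreal_lessI)
    have ev2: "eventually (\<lambda>n. b < 0 \<or> ennreal b < H (qn n)) sequentially"
    proof (cases "b < 0")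
      case False
      then have "ennreal b < liminf (\<lambda>n. H (qn n))" using bH Hliminf by (auto intro: less_le_trans)
      then show ?thesis using less_LiminfD by (auto elim: eventually_mono)
    qed simp
    have ev3: "eventually (\<lambda>n. inverse (real (Suc n)) < \<epsilon>) sequentially"
      using LIMSEQ_inverse_real_of_nat eps by (intro order_tendstoD(2)) auto
    have evF: "eventually (\<lambda>n. False) sequentially"
      using ev1 ev2 ev3
    proof eventually_elim
      case (elim n)
      have h1: "\<phi> (qn n) \<le> ereal (g + \<epsilon> - b)"
        unfolding \<phi>GH using elim g eps by (intro alg4) auto
      have h2: "ereal (g + \<epsilon> - b) \<le> ereal (s' - \<epsilon>)" using gb by simp
      have h3: "ereal (s' - \<epsilon>) < ereal (s' - 1 / Suc n)" using elim by (simp add: field_simps)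
      have a1: "\<phi> (qn n) \<le> ereal (s' - \<epsilon>)" using h1 h2 by (rule order_trans)
      have a2: "ereal (s' - \<epsilon>) < \<phi> (qn n)" using h3 qnlow[of n] by (rule less_trans)
      show False using a1 a2 by simp
    qed
    show False using evF eventually_False_sequentially by blast
  qed
  moreover have "\<phi> q \<le> s" if "q \<in> {0..1}" for q
    unfolding s_def using that by (rule SUP_upper)
  ultimately show ?thesis using p unfolding \<phi>_def by (meson order_trans)
qed

theorem mainTheorem4:
  fixes M :: "'w measure" and X :: "'a \<Rightarrow> 'w \<Rightarrow> real" and \<Lambda> :: "'a set"
    and L :: "real measure" and Q :: "'a set pmf"
  assumes "prob_space M"
    and "finite \<Lambda>" and "\<Lambda> \<noteq> {}"
    and "prob_space.indep_vars M (\<lambda>_. borel) X \<Lambda>"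
    and "\<forall>x\<in>\<Lambda>. distr M borel (X x) = L"
    and "AE t in L. -1 \<le> t"
    and "(\<integral>\<^sup>+ t. e2ennreal (elog (1 + t)) \<partial>L) < \<infinity>"
    and "set_pmf Q \<subseteq> Pow \<Lambda>"
  shows "\<exists>p\<in>{0..1::real}.
           (\<forall>q\<in>{0..1::real}. eexpect L (\<lambda>t. elog (1 + q * t)) \<le> eexpect L (\<lambda>t. elog (1 + p * t)))
         \<and> eexpect M (\<lambda>w. elog (measure_pmf.expectation Q (\<lambda>S. \<Prod>x\<in>S. 1 + X x w)))
             \<le> ereal (real (card \<Lambda>)) * eexpect L (\<lambda>t. elog (1 + p * t))"
proof -
  interpret M: prob_space M by (rule assms(1))
  note fin = assms(2)
  obtain x1 where x1: "x1 \<in> \<Lambda>" using assms(3) by blast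
  have rv: "\<And>x. x \<in> \<Lambda> \<Longrightarrow> X x \<in> borel_measurable M"
    using assms(4) by (simp add: M.indep_vars_def)
  have L: "L = distr M borel (X x1)" using assms(5) x1 by simp
  have PL: "prob_space L" unfolding L by (rule M.prob_space_distr) (rule rv[OF x1])
  have SL: "sets L = sets borel" unfolding L by simp
  obtain p where p: "p \<in> {0..1}"
    and pmax: "\<forall>q\<in>{0..1::real}. eexpect L (\<lambda>t. elog (1 + q * t)) \<le> eexpect L (\<lambda>t. elog (1 + p * t))"
    using max_exists[OF PL SL assms(6,7)] by blast
  define \<phi> where "\<phi> = eexpect L (\<lambda>t. elog (1 + p * t))"
  have phi0: "0 \<le> \<phi>"
    using pmax[rule_format, of 0] unfolding \<phi>_def by (simp add: eexpect_def elog_def)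
  have "(\<integral>\<^sup>+ t. e2ennreal (elog (1 + p * t)) \<partial>L) \<le> (\<integral>\<^sup>+ t. e2ennreal (elog (1 + t)) \<partial>L)"
    using p by (intro nn_integral_mono pp_mono_r) auto
  then have "(\<integral>\<^sup>+ t. e2ennreal (elog (1 + p * t)) \<partial>L) < \<infinity>"
    using assms(7) by (simp add: le_less_trans)
  then obtain a where a: "(\<integral>\<^sup>+ t. e2ennreal (elog (1 + p * t)) \<partial>L) = ennreal a" "0 \<le> a"
    using fin_ennreal by blast
  have "\<phi> \<le> ereal a" unfolding \<phi>_def eexpect_def a(1) using a(2) by (simp add: ereal_diff_le_self)
  then obtain \<Phi> where Phi: "\<phi> = ereal \<Phi>" using phi0 by (cases \<phi>) auto
  have PHI: "\<forall>q\<in>{0..1}. eexpect L (\<lambda>t. elog (1 + q * t)) \<le> ereal \<Phi>"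
    using pmax Phi \<phi>_def by simp
  have core': "eexpect (PiM \<Lambda> (\<lambda>_. L)) (\<lambda>\<omega>. elog (ZZ \<Lambda> (pmf Q) \<omega>)) \<le> ereal (real (card \<Lambda>) * \<Phi>)"
    using core[OF PL SL assms(6,7) PHI fin] sum_pmf_eq_1[OF _ assms(8)] fin by auto
  define Xv where "Xv w = (\<lambda>x\<in>\<Lambda>. X x w)" for w
  have mXv: "Xv \<in> measurable M (PiM \<Lambda> (\<lambda>_. borel))"
    unfolding Xv_def[abs_def] by (intro measurable_restrict rv)
  have D: "distr M (PiM \<Lambda> (\<lambda>_. borel)) Xv = PiM \<Lambda> (\<lambda>_. L)"
  proof -
    have "distr M (PiM \<Lambda> (\<lambda>_. borel)) Xv = PiM \<Lambda> (\<lambda>x. distr M borel (X x))"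
      unfolding Xv_def[abs_def] using M.indep_vars_iff_distr_eq_PiM'[OF assms(3) rv] assms(4) by simp
    also have "\<dots> = PiM \<Lambda> (\<lambda>_. L)"
      using assms(5) by (intro PiM_cong) auto
    finally show ?thesis .
  qed
  have pw: "measure_pmf.expectation Q (\<lambda>S. \<Prod>x\<in>S. 1 + X x w) = ZZ \<Lambda> (pmf Q) (Xv w)" for w
  proof -
    have "measure_pmf.expectation Q (\<lambda>S. \<Prod>x\<in>S. 1 + X x w) = (\<Sum>S\<in>Pow \<Lambda>. pmf Q S *\<^sub>R (\<Prod>x\<in>S. 1 + X x w))"
      using assms(8) fin by (intro integral_measure_pmf) auto
    also have "\<dots> = ZZ \<Lambda> (pmf Q) (Xv w)"
      unfolding ZZ_def Xv_def by (intro sum.cong refl) (auto intro!: prod.cong)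
    finally show ?thesis .
  qed
  have mZ: "(\<lambda>\<omega>. h (elog (ZZ \<Lambda> (pmf Q) \<omega>))) \<in> borel_measurable (PiM \<Lambda> (\<lambda>_. borel))"
    if "h \<in> borel_measurable borel" for h :: "ereal \<Rightarrow> ennreal"
    using ZZ_meas[of \<Lambda> \<Lambda> "borel :: real measure" "pmf Q", OF order_refl fin refl] that by measurable
  have tr: "(\<integral>\<^sup>+ w. h (elog (ZZ \<Lambda> (pmf Q) (Xv w))) \<partial>M) = (\<integral>\<^sup>+ \<omega>. h (elog (ZZ \<Lambda> (pmf Q) \<omega>)) \<partial>PiM \<Lambda> (\<lambda>_. L))"
    if "h \<in> borel_measurable borel" for h :: "ereal \<Rightarrow> ennreal"
    unfolding D[symmetric] by (rule nn_integral_distr[symmetric, OF mXv]) (simp add: mZ[OF that])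
  have "eexpect M (\<lambda>w. elog (measure_pmf.expectation Q (\<lambda>S. \<Prod>x\<in>S. 1 + X x w)))
      = eexpect (PiM \<Lambda> (\<lambda>_. L)) (\<lambda>\<omega>. elog (ZZ \<Lambda> (pmf Q) \<omega>))"
    unfolding eexpect_def pw using tr[of e2ennreal] tr[of "\<lambda>z. e2ennreal (- z)"] by simp
  also have "\<dots> \<le> ereal (real (card \<Lambda>)) * \<phi>"
    using core' Phi by simp
  finally show ?thesis using p pmax \<phi>_def by blast
qed

end
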